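(* Let $A\in\mathbb{R}^{n\times n}$ be symmetric positive semidefinite, let $1\le k\le n$, and let $\mathrm{OPT}=\max_{\|y\|_2=1,\|y\|_0\le k} y^{\intercal}Ay$. Let $v_1$ be a unit-norm top eigenvector of $A$. Let $\hat x$ be defined by $\hat x_j=[v_1]_j$ if $[v_1]_j$ is one of the $k$ largest (in absolute value) entries of $v_1$, and $\hat x_j=0$ otherwise, and let $x=\hat x/\|\hat x\|_2$. Then $x^{\intercal}Ax\ge \frac{k}{n}\,\mathrm{OPT}$.
   Context: $\|y\|_0$ denotes the number of nonzero entries of $y$. *)

theory Defs
  imports "HOL-Analysis.Analysis"
begin

definition l0_norm :: "real ^ 'n \<Rightarrow> nat" where
  "l0_norm y = card {i. y $ i \<noteq> 0}"

definition sym_psd :: "real ^ 'n ^ 'n \<Rightarrow> bool" where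
  "sym_psd A \<longleftrightarrow> transpose A = A \<and> (\<forall>x. 0 \<le> x \<bullet> (A *v x))"

definition is_eigenpair :: "real ^ 'n ^ 'n \<Rightarrow> real \<Rightarrow> real ^ 'n \<Rightarrow> bool" where
  "is_eigenpair A l v \<longleftrightarrow> v \<noteq> 0 \<and> A *v v = l *\<^sub>R v"

definition top_eigenvector :: "real ^ 'n ^ 'n \<Rightarrow> real ^ 'n \<Rightarrow> bool" where
  "top_eigenvector A v \<longleftrightarrow>
     (\<exists>l. is_eigenpair A l v \<and> (\<forall>m w. is_eigenpair A m w \<longrightarrow> m \<le> l))"

definition sparse_opt :: "real ^ 'n ^ 'n \<Rightarrow> nat \<Rightarrow> real" where
  "sparse_opt A k = Sup {y \<bullet> (A *v y) | y. norm y = 1 \<and> l0_norm y \<le> k}"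

definition top_k_indices :: "real ^ 'n \<Rightarrow> nat \<Rightarrow> 'n set \<Rightarrow> bool" where
  "top_k_indices v k S \<longleftrightarrow> card S = k \<and> (\<forall>i\<in>S. \<forall>j. j \<notin> S \<longrightarrow> \<bar>v $ j\<bar> \<le> \<bar>v $ i\<bar>)"

definition truncate_vec :: "real ^ 'n \<Rightarrow> 'n set \<Rightarrow> real ^ 'n" where
  "truncate_vec v S = (\<chi> j. if j \<in> S then v $ j else 0)"

end

theory Submission
  imports Defs
begin

lemma sym_form:
  fixes A :: "real ^ 'n ^ 'n"
  assumes "transpose A = A"
  shows "x \<bullet> (A *v y) = y \<bullet> (A *v x)"
proof -
  have "x \<bullet> (A *v y) = (x v* A) \<bullet> y" by (simp add: dot_lmul_matrix)
  also have "\<dots> = (transpose A *v x) \<bullet> y" by simp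
  also have "\<dots> = y \<bullet> (A *v x)" using assms by (simp add: inner_commute)
  finally show ?thesis .
qed

lemma expand_form:
  fixes A :: "real ^ 'n ^ 'n"
  assumes "transpose A = A"
  shows "(a + t *\<^sub>R b) \<bullet> (A *v (a + t *\<^sub>R b)) =
     a \<bullet> (A *v a) + 2 * t * (a \<bullet> (A *v b)) + t^2 * (b \<bullet> (A *v b))"
  using sym_form[OF assms, of b a]
  by (simp add: matrix_vector_right_distrib matrix_vector_mult_scaleR inner_add_left inner_add_right power2_eq_square algebra_simps)

lemma quad_disc:
  fixes a c q :: real
  assumes "\<And>t. 0 \<le> a + 2 * t * c + t^2 * q" "0 \<le> q"
  shows "c^2 \<le> a * q"
proof (cases "q = 0")
  case True
  have "c = 0"
  proof (rule ccontr)
    assume "c \<noteq> 0"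
    have "0 \<le> a + 2 * (-(\<bar>a\<bar>+1)/(2*c)) * c" using assms(1)[of "-(\<bar>a\<bar>+1)/(2*c)"] True by simp
    also have "\<dots> = a - (\<bar>a\<bar>+1)" using \<open>c\<noteq>0\<close> by (simp add: field_simps)
    finally show False by simp
  qed
  then show ?thesis using True by simp
next
  case False
  then have qp: "q > 0" using assms(2) by simp
  have "0 \<le> a + 2 * (-c/q) * c + (-c/q)^2 * q" by (rule assms(1))
  also have "\<dots> = a - c^2/q" using qp by (simp add: field_simps power2_eq_square)
  finally have "c^2/q \<le> a" by simp
  then show ?thesis using qp by (simp add: field_simps)
qed

lemma psd_cs:
  fixes A :: "real ^ 'n ^ 'n"
  assumes "sym_psd A"
  shows "(a \<bullet> (A *v b))^2 \<le> (a \<bullet> (A *v a)) * (b \<bullet> (A *v b))"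
proof -
  have T: "transpose A = A" and P: "\<And>x. 0 \<le> x \<bullet> (A *v x)" using assms by (auto simp: sym_psd_def)
  show ?thesis
    by (rule quad_disc) (use P[of "a + _ *\<^sub>R b"] expand_form[OF T] P in auto)
qed

lemma form_le_top:
  fixes A :: "real ^ 'n ^ 'n"
  assumes "sym_psd A" "is_eigenpair A l v" "\<forall>m w. is_eigenpair A m w \<longrightarrow> m \<le> l"
    and "norm y = 1"
  shows "y \<bullet> (A *v y) \<le> l"
proof -
  have T: "transpose A = A" using assms(1) by (simp add: sym_psd_def)
  have cont: "continuous_on (sphere 0 1) (\<lambda>y. y \<bullet> (A *v (y::real^'n)))"
    by (intro continuous_intros linear_continuous_on matrix_vector_mul_linear)
  have ne: "sphere (0::real^'n) 1 \<noteq> {}" using assms(4) by auto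
  obtain y0 where y0: "y0 \<in> sphere 0 1" and mx: "\<And>z. z \<in> sphere 0 1 \<Longrightarrow> z \<bullet> (A *v z) \<le> y0 \<bullet> (A *v y0)"
    using continuous_attains_sup[OF compact_sphere ne cont] by blast
  define \<mu> where "\<mu> = y0 \<bullet> (A *v y0)"
  have ny0: "norm y0 = 1" using y0 by simp
  have qz: "0 \<le> \<mu> * (z \<bullet> z) - z \<bullet> (A *v z)" for z
  proof (cases "z = 0")
    case True then show ?thesis by simp
  next
    case False
    let ?u = "(1 / norm z) *\<^sub>R z"
    have "?u \<in> sphere 0 1" using False by simp
    then have "?u \<bullet> (A *v ?u) \<le> \<mu>" using mx \<mu>_def by blast
    then have "(z \<bullet> (A *v z)) / (norm z)^2 \<le> \<mu>"
      by (simp add: matrix_vector_mult_scaleR power2_eq_square)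
    then have "z \<bullet> (A *v z) \<le> \<mu> * (norm z)^2" using False by (simp add: field_simps)
    then show ?thesis by (simp add: power2_norm_eq_inner)
  qed
  have key: "(\<mu> * (y0 \<bullet> w) - w \<bullet> (A *v y0)) = 0" for w
  proof -
    let ?c = "\<mu> * (y0 \<bullet> w) - y0 \<bullet> (A *v w)"
    let ?q = "\<mu> * (w \<bullet> w) - w \<bullet> (A *v w)"
    have y0y0: "y0 \<bullet> y0 = 1" using ny0 by (metis norm_eq_1)
    have "?c^2 \<le> 0 * ?q"
    proof (rule quad_disc)
      fix t
      have "0 \<le> \<mu> * ((y0 + t *\<^sub>R w) \<bullet> (y0 + t *\<^sub>R w)) - (y0 + t *\<^sub>R w) \<bullet> (A *v (y0 + t *\<^sub>R w))"
        by (rule qz)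
      also have "\<dots> = 0 + 2 * t * ?c + t^2 * ?q"
        unfolding expand_form[OF T]
        by (simp add: inner_add_left inner_add_right y0y0 \<mu>_def inner_commute power2_eq_square algebra_simps)
      finally show "0 \<le> 0 + 2 * t * ?c + t^2 * ?q" .
    next
      show "0 \<le> ?q" by (rule qz)
    qed
    then have "?c = 0" by simp
    then show ?thesis using sym_form[OF T, of y0 w] by simp
  qed
  define r where "r = \<mu> *\<^sub>R y0 - A *v y0"
  have "r \<bullet> r = 0" using key[of r] unfolding r_def
    by (simp add: inner_diff_left inner_commute)
  then have "A *v y0 = \<mu> *\<^sub>R y0" unfolding r_def by simp
  moreover have "y0 \<noteq> 0" using ny0 by auto
  ultimately have "is_eigenpair A \<mu> y0" by (simp add: is_eigenpair_def)
  then have "\<mu> \<le> l" using assms(3) by blast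
  moreover have "y \<bullet> (A *v y) \<le> \<mu>" using mx assms(4) \<mu>_def by simp
  ultimately show ?thesis by simp
qed

lemma mass:
  fixes v :: "real ^ 'n"
  assumes "top_k_indices v k S" "1 \<le> k" "k \<le> CARD('n)"
  shows "real k * (\<Sum>j\<in>UNIV. (v$j)^2) \<le> real CARD('n) * (\<Sum>j\<in>S. (v$j)^2)"
proof -
  have cS: "card S = k" and dom: "\<And>i j. i \<in> S \<Longrightarrow> j \<notin> S \<Longrightarrow> \<bar>v$j\<bar> \<le> \<bar>v$i\<bar>"
    using assms(1) by (auto simp: top_k_indices_def)
  have Sne: "S \<noteq> {}" using cS assms(2) by auto
  have fS: "finite S" by simp
  define m where "m = Min ((\<lambda>i. (v$i)^2) ` S)"
  have "m \<in> (\<lambda>i. (v$i)^2) ` S" unfolding m_def using Sne by (intro Min_in) auto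
  then obtain i0 where i0: "i0 \<in> S" "m = (v$i0)^2" by auto
  have lo: "\<And>i. i \<in> S \<Longrightarrow> m \<le> (v$i)^2" unfolding m_def by simp
  have hi: "\<And>j. j \<notin> S \<Longrightarrow> (v$j)^2 \<le> m"
    using dom[OF i0(1)] i0(2) by (metis abs_ge_zero power2_abs power_mono)
  have s1: "real k * m \<le> (\<Sum>j\<in>S. (v$j)^2)"
    using sum_mono[of S "\<lambda>_. m" "\<lambda>j. (v$j)^2"] lo cS by simp
  have cC: "card (UNIV - S) = CARD('n) - k" using cS by (simp add: card_Diff_subset)
  have s2: "(\<Sum>j\<in>UNIV - S. (v$j)^2) \<le> real (CARD('n) - k) * m"
    using sum_mono[of "UNIV - S" "\<lambda>j. (v$j)^2" "\<lambda>_. m"] hi cC by simp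
  have split: "(\<Sum>j\<in>UNIV. (v$j)^2) = (\<Sum>j\<in>S. (v$j)^2) + (\<Sum>j\<in>UNIV - S. (v$j)^2)"
    by (metis add.commute finite subset_UNIV sum.subset_diff)
  have nk: "real (CARD('n) - k) = real CARD('n) - real k" using assms(3) by simp
  have m0: "0 \<le> m" using i0 by simp
  have "real k * (\<Sum>j\<in>UNIV - S. (v$j)^2) \<le> real k * (real (CARD('n) - k) * m)"
    using s2 by (simp add: mult_left_mono)
  moreover have "(real CARD('n) - real k) * (real k * m) \<le> (real CARD('n) - real k) * (\<Sum>j\<in>S. (v$j)^2)"
    using s1 assms(3) by (simp add: mult_left_mono)
  ultimately show ?thesis unfolding split nk by (simp add: algebra_simps)
qed

lemma norm_trunc:
  fixes v :: "real ^ 'n"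
  shows "truncate_vec v S \<bullet> truncate_vec v S = (\<Sum>j\<in>S. (v$j)^2)"
    "truncate_vec v S \<bullet> v = (\<Sum>j\<in>S. (v$j)^2)"
proof -
  have e1: "(\<lambda>i. (if i \<in> S then v $ i else 0) * (if i \<in> S then v $ i else 0)) = (\<lambda>i. if i \<in> S then (v$i)^2 else 0)"
    by (auto simp: power2_eq_square)
  have e2: "(\<lambda>i. (if i \<in> S then v $ i else 0) * v $ i) = (\<lambda>i. if i \<in> S then (v$i)^2 else 0)"
    by (auto simp: power2_eq_square)
  have e3: "(\<Sum>i\<in>UNIV. if i \<in> S then (v$i)^2 else 0) = (\<Sum>j\<in>S. (v$j)^2)"
    using sum.inter_restrict[of UNIV "\<lambda>j. (v$j)^2" S] by simp
  show "truncate_vec v S \<bullet> truncate_vec v S = (\<Sum>j\<in>S. (v$j)^2)"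
    "truncate_vec v S \<bullet> v = (\<Sum>j\<in>S. (v$j)^2)"
    unfolding truncate_vec_def inner_vec_def inner_real_def vec_lambda_beta e1 e2 e3 by simp_all
qed

lemma sumsq_norm:
  fixes v :: "real ^ 'n"
  shows "v \<bullet> v = (\<Sum>j\<in>UNIV. (v$j)^2)"
  unfolding inner_vec_def by (simp add: power2_eq_square)

theorem lemma2:
  fixes A :: "real ^ 'n ^ 'n" and v :: "real ^ 'n" and k :: nat and S :: "'n set"
  assumes "sym_psd A"
    and "1 \<le> k" and "k \<le> CARD('n)"
    and "top_eigenvector A v" and "norm v = 1"
    and "top_k_indices v k S"
  shows "let xh = truncate_vec v S; x = (1 / norm xh) *\<^sub>R xh
         in x \<bullet> (A *v x) \<ge> real k / real CARD('n) * sparse_opt A k"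
proof -
  define xh where "xh = truncate_vec v S"
  define x where "x = (1 / norm xh) *\<^sub>R xh"
  obtain l where ep: "is_eigenpair A l v" and top: "\<forall>m w. is_eigenpair A m w \<longrightarrow> m \<le> l"
    using assms(4) by (auto simp: top_eigenvector_def)
  have Av: "A *v v = l *\<^sub>R v" using ep by (simp add: is_eigenpair_def)
  have T: "transpose A = A" and P: "\<And>x. 0 \<le> x \<bullet> (A *v x)" using assms(1) by (auto simp: sym_psd_def)
  have vv: "v \<bullet> v = 1" using assms(5) by (metis norm_eq_1)
  have vAv: "v \<bullet> (A *v v) = l" using Av vv by simp
  have l0: "0 \<le> l" using P[of v] vAv by simp
  define N where "N = xh \<bullet> xh"
  define Q where "Q = xh \<bullet> (A *v xh)"
  have Nsum: "N = (\<Sum>j\<in>S. (v$j)^2)" unfolding N_def xh_def by (rule norm_trunc(1))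
  have xv: "xh \<bullet> v = N" unfolding xh_def Nsum by (rule norm_trunc(2))
  have n0: "0 < real CARD('n)" by simp
  have "real k * 1 \<le> real CARD('n) * N"
    using mass[OF assms(6,2,3)] vv sumsq_norm[of v] Nsum by simp
  then have Nk: "real k / real CARD('n) \<le> N" using n0 by (simp add: field_simps)
  have kpos: "0 < real k / real CARD('n)" using assms(2) n0 by simp
  have Npos: "0 < N" using Nk kpos by linarith
  have xhAv: "xh \<bullet> (A *v v) = l * N" using Av xv by simp
  have "(xh \<bullet> (A *v v))^2 \<le> Q * (v \<bullet> (A *v v))" unfolding Q_def by (rule psd_cs[OF assms(1)])
  then have cs: "(l * N)^2 \<le> Q * l" using xhAv vAv by simp
  have QlN: "l * N^2 \<le> Q"
  proof (cases "l = 0")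
    case True then show ?thesis using P[of xh] Q_def by simp
  next
    case False
    then have "0 < l" using l0 by simp
    moreover have "l * (l * N^2) \<le> l * Q" using cs by (simp add: power2_eq_square algebra_simps)
    ultimately show ?thesis by simp
  qed
  have nxh: "(norm xh)^2 = N" unfolding N_def by (simp add: power2_norm_eq_inner)
  have xAx: "x \<bullet> (A *v x) = Q / N"
    unfolding x_def Q_def using nxh by (simp add: matrix_vector_mult_scaleR power2_eq_square)
  have "l * N \<le> Q / N" using QlN Npos by (simp add: field_simps power2_eq_square)
  have opt: "sparse_opt A k \<le> l"
    unfolding sparse_opt_def
  proof (rule cSup_least)
    obtain i :: 'n where True by simp
    have "norm (axis i (1::real)) = 1" by simp
    moreover have "l0_norm (axis i (1::real)) \<le> k"
      unfolding l0_norm_def axis_def using assms(2) by simp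
    ultimately show "{y \<bullet> (A *v y) |y. norm y = 1 \<and> l0_norm y \<le> k} \<noteq> {}" by blast
  next
    fix z assume "z \<in> {y \<bullet> (A *v y) |y. norm y = 1 \<and> l0_norm y \<le> k}"
    then show "z \<le> l" using form_le_top[OF assms(1) ep top] by blast
  qed
  have "real k / real CARD('n) * sparse_opt A k \<le> real k / real CARD('n) * l"
    using opt kpos by (intro mult_left_mono) auto
  also have "\<dots> \<le> N * l" using Nk l0 by (intro mult_right_mono) auto
  also have "\<dots> \<le> Q / N" using \<open>l * N \<le> Q / N\<close> by (simp add: mult.commute)
  finally show ?thesis unfolding Let_def xh_def[symmetric] x_def[symmetric] xAx .
qed

end
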